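(* Let $p,p'$ be processes (of possibly different LTSs) such that $p$ subsumes $p'$. If $\varphi\in\mathrm{sHML}$ is closed and $p\in[\![\varphi]\!]_B$, then $p'\in[\![\varphi]\!]_B$. Dually, if $\varphi\in\mathrm{cHML}$ is closed and $p\notin[\![\varphi]\!]_B$, then $p'\notin[\![\varphi]\!]_B$.
   Context: Fix a finite set $\mathrm{Act}$ of actions, $\tau\notin\mathrm{Act}$. $\mathrm{sHML}$: $\varphi::=\mathrm{tt}\mid\mathrm{ff}\mid[A]\varphi\mid\varphi\wedge\varphi\mid\max X.\varphi\mid X$; $\mathrm{cHML}$: $\varphi::=\mathrm{tt}\mid\mathrm{ff}\mid\langle A\rangle\varphi\mid\varphi\vee\varphi\mid\min X.\varphi\mid X$ ($A\subseteq\mathrm{Act}$, guarded). Branching-time semantics over an LTS $(\mathrm{Proc},\mathrm{Act}\cup\{\tau\},\to)$, with $p\overset{a}{\Longrightarrow}q$ iff $p(\xrightarrow{\tau})^*\xrightarrow{a}(\xrightarrow{\tau})^*q$ and $p\overset{a_1\cdots a_k}{\Longrightarrow}q$ the composition: $[\![\mathrm{tt}]\!]_B=\mathrm{Proc}$, $[\![\mathrm{ff}]\!]_B=\emptyset$, $\vee,\wedge$ union/intersection, $[\![\langle A\rangle\varphi,\rho]\!]_B=\{p\mid\exists a\in A,\exists q.\ p\overset{a}{\Longrightarrow}q\wedge q\in[\![\varphi,\rho]\!]_B\}$, $[\![[A]\varphi,\rho]\!]_B=\{p\mid\forall a\in A,\forall q.\ p\overset{a}{\Longrightarrow}q\Rightarrow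 q\in[\![\varphi,\rho]\!]_B\}$, $\min/\max$ as least/greatest fixpoints, $[\![X,\rho]\!]_B=\rho(X)$. A process $p$ produces a finite trace $s\in\mathrm{Act}^*$ if $p\overset{s}{\Longrightarrow}q$ for some $q$, and produces an infinite trace $a_1a_2\cdots$ if there are $p=p_0,p_1,p_2,\ldots$ with $p_{i-1}\overset{a_i}{\Longrightarrow}p_i$ for all $i\ge1$. $p$ subsumes $p'$ if $p$ produces every finite or infinite trace that $p'$ produces. *)

theory Defs
  imports Main
begin

text \<open>Actions: a finite type 'a (= Act). LTS transitions labelled by 'a option,
  where None plays the role of the silent action tau.\<close>

type_synonym ('p, 'a) lts = "'p \<Rightarrow> 'a option \<Rightarrow> 'p \<Rightarrow> bool"

definition tau_steps :: "('p, 'a) lts \<Rightarrow> 'p \<Rightarrow> 'p \<Rightarrow> bool" where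
  "tau_steps T = (\<lambda>p q. T p None q)\<^sup>*\<^sup>*"

definition wstep :: "('p, 'a) lts \<Rightarrow> 'p \<Rightarrow> 'a \<Rightarrow> 'p \<Rightarrow> bool" where
  "wstep T p a q \<longleftrightarrow> (\<exists>p1 p2. tau_steps T p p1 \<and> T p1 (Some a) p2 \<and> tau_steps T p2 q)"

fun wsteps :: "('p, 'a) lts \<Rightarrow> 'p \<Rightarrow> 'a list \<Rightarrow> 'p \<Rightarrow> bool" where
  "wsteps T p [] q \<longleftrightarrow> p = q"
| "wsteps T p (a # s) q \<longleftrightarrow> (\<exists>r. wstep T p a r \<and> wsteps T r s q)"

definition produces_fin :: "('p, 'a) lts \<Rightarrow> 'p \<Rightarrow> 'a list \<Rightarrow> bool" where
  "produces_fin T p s \<longleftrightarrow> (\<exists>q. wsteps T p s q)"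

text \<open>Infinite trace a_1 a_2 ... represented as w :: nat => 'a with w i = a_(i+1).\<close>
definition produces_inf :: "('p, 'a) lts \<Rightarrow> 'p \<Rightarrow> (nat \<Rightarrow> 'a) \<Rightarrow> bool" where
  "produces_inf T p w \<longleftrightarrow> (\<exists>ps. ps 0 = p \<and> (\<forall>i. wstep T (ps i) (w i) (ps (Suc i))))"

definition subsumes :: "('p, 'a) lts \<Rightarrow> 'p \<Rightarrow> ('q, 'a) lts \<Rightarrow> 'q \<Rightarrow> bool" where
  "subsumes T p T' p' \<longleftrightarrow>
     (\<forall>s. produces_fin T' p' s \<longrightarrow> produces_fin T p s) \<and>
     (\<forall>w. produces_inf T' p' w \<longrightarrow> produces_inf T p w)"

datatype ('a, 'v) shml = STT | SFF | SBox "'a set" "('a, 'v) shml"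
  | SAnd "('a, 'v) shml" "('a, 'v) shml" | SMax 'v "('a, 'v) shml" | SVar 'v

datatype ('a, 'v) chml = CTT | CFF | CDia "'a set" "('a, 'v) chml"
  | COr "('a, 'v) chml" "('a, 'v) chml" | CMin 'v "('a, 'v) chml" | CVar 'v

primrec ssem :: "('p, 'a) lts \<Rightarrow> ('a, 'v) shml \<Rightarrow> ('v \<Rightarrow> 'p set) \<Rightarrow> 'p set" where
  "ssem T STT \<rho> = UNIV"
| "ssem T SFF \<rho> = {}"
| "ssem T (SBox A \<phi>) \<rho> = {p. \<forall>a\<in>A. \<forall>q. wstep T p a q \<longrightarrow> q \<in> ssem T \<phi> \<rho>}"
| "ssem T (SAnd \<phi> \<psi>) \<rho> = ssem T \<phi> \<rho> \<inter> ssem T \<psi> \<rho>"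
| "ssem T (SMax X \<phi>) \<rho> = gfp (\<lambda>S. ssem T \<phi> (\<rho>(X := S)))"
| "ssem T (SVar X) \<rho> = \<rho> X"

primrec csem :: "('p, 'a) lts \<Rightarrow> ('a, 'v) chml \<Rightarrow> ('v \<Rightarrow> 'p set) \<Rightarrow> 'p set" where
  "csem T CTT \<rho> = UNIV"
| "csem T CFF \<rho> = {}"
| "csem T (CDia A \<phi>) \<rho> = {p. \<exists>a\<in>A. \<exists>q. wstep T p a q \<and> q \<in> csem T \<phi> \<rho>}"
| "csem T (COr \<phi> \<psi>) \<rho> = csem T \<phi> \<rho> \<union> csem T \<psi> \<rho>"
| "csem T (CMin X \<phi>) \<rho> = lfp (\<lambda>S. csem T \<phi> (\<rho>(X := S)))"
| "csem T (CVar X) \<rho> = \<rho> X"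

primrec sfv :: "('a, 'v) shml \<Rightarrow> 'v set" where
  "sfv STT = {}" | "sfv SFF = {}" | "sfv (SBox A \<phi>) = sfv \<phi>"
| "sfv (SAnd \<phi> \<psi>) = sfv \<phi> \<union> sfv \<psi>" | "sfv (SMax X \<phi>) = sfv \<phi> - {X}"
| "sfv (SVar X) = {X}"

primrec cfv :: "('a, 'v) chml \<Rightarrow> 'v set" where
  "cfv CTT = {}" | "cfv CFF = {}" | "cfv (CDia A \<phi>) = cfv \<phi>"
| "cfv (COr \<phi> \<psi>) = cfv \<phi> \<union> cfv \<psi>" | "cfv (CMin X \<phi>) = cfv \<phi> - {X}"
| "cfv (CVar X) = {X}"

primrec sguarded_in :: "'v \<Rightarrow> ('a, 'v) shml \<Rightarrow> bool" where
  "sguarded_in X STT = True" | "sguarded_in X SFF = True" | "sguarded_in X (SBox A \<phi>) = True"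
| "sguarded_in X (SAnd \<phi> \<psi>) = (sguarded_in X \<phi> \<and> sguarded_in X \<psi>)"
| "sguarded_in X (SMax Y \<phi>) = (Y = X \<or> sguarded_in X \<phi>)"
| "sguarded_in X (SVar Y) = (Y \<noteq> X)"

primrec sguarded :: "('a, 'v) shml \<Rightarrow> bool" where
  "sguarded STT = True" | "sguarded SFF = True" | "sguarded (SBox A \<phi>) = sguarded \<phi>"
| "sguarded (SAnd \<phi> \<psi>) = (sguarded \<phi> \<and> sguarded \<psi>)"
| "sguarded (SMax X \<phi>) = (sguarded_in X \<phi> \<and> sguarded \<phi>)"
| "sguarded (SVar X) = True"

primrec cguarded_in :: "'v \<Rightarrow> ('a, 'v) chml \<Rightarrow> bool" where
  "cguarded_in X CTT = True" | "cguarded_in X CFF = True" | "cguarded_in X (CDia A \<phi>) = True"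
| "cguarded_in X (COr \<phi> \<psi>) = (cguarded_in X \<phi> \<and> cguarded_in X \<psi>)"
| "cguarded_in X (CMin Y \<phi>) = (Y = X \<or> cguarded_in X \<phi>)"
| "cguarded_in X (CVar Y) = (Y \<noteq> X)"

primrec cguarded :: "('a, 'v) chml \<Rightarrow> bool" where
  "cguarded CTT = True" | "cguarded CFF = True" | "cguarded (CDia A \<phi>) = cguarded \<phi>"
| "cguarded (COr \<phi> \<psi>) = (cguarded \<phi> \<and> cguarded \<psi>)"
| "cguarded (CMin X \<phi>) = (cguarded_in X \<phi> \<and> cguarded \<phi>)"
| "cguarded (CVar X) = True"

end

theory Submission
  imports Defs
begin

definition ftr :: "('p, 'a) lts \<Rightarrow> 'p \<Rightarrow> 'a list set" where
  "ftr T p = {s. produces_fin T p s}"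

lemma ftr_nil: "[] \<in> ftr T p" by (auto simp: ftr_def produces_fin_def)

lemma ftr_cons: "(a # s \<in> ftr T p) = (\<exists>q. wstep T p a q \<and> s \<in> ftr T q)"
  unfolding ftr_def produces_fin_def mem_Collect_eq
proof
  assume "\<exists>x. wsteps T p (a # s) x"
  then obtain x where "wsteps T p (a # s) x" by blast
  then obtain r where "wstep T p a r" "wsteps T r s x" by auto
  then show "\<exists>q. wstep T p a q \<and> (\<exists>x. wsteps T q s x)" by blast
next
  assume "\<exists>q. wstep T p a q \<and> (\<exists>x. wsteps T q s x)"
  then obtain q x where "wstep T p a q" "wsteps T q s x" by blast
  then have "wsteps T p (a # s) x" by auto
  then show "\<exists>x. wsteps T p (a # s) x" by blast
qed

definition srel :: "('p, 'a) lts \<Rightarrow> ('q, 'a) lts \<Rightarrow> 'p set \<Rightarrow> 'q set \<Rightarrow> bool" where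
  "srel T T' S S' \<longleftrightarrow> (\<forall>Q p'. Q \<subseteq> S \<and> ftr T' p' \<subseteq> \<Union>(ftr T ` Q) \<longrightarrow> p' \<in> S')"

definition crel :: "('p, 'a) lts \<Rightarrow> ('q, 'a) lts \<Rightarrow> 'p set \<Rightarrow> 'q set \<Rightarrow> bool" where
  "crel T T' S S' \<longleftrightarrow> (\<forall>Q p'. p' \<in> S' \<and> ftr T' p' \<subseteq> \<Union>(ftr T ` Q) \<longrightarrow> Q \<inter> S \<noteq> {})"

lemma ssem_mono: "(\<forall>X. \<rho> X \<subseteq> \<sigma> X) \<Longrightarrow> ssem T \<phi> \<rho> \<subseteq> ssem T \<phi> \<sigma>"
proof (induction \<phi> arbitrary: \<rho> \<sigma>)
  case (SMax X \<phi>)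
  show ?case apply simp apply (rule gfp_mono)
  proof -
    fix Z show "ssem T \<phi> (\<rho>(X := Z)) \<subseteq> ssem T \<phi> (\<sigma>(X := Z))"
      apply (rule SMax.IH) using SMax.prems by simp
  qed
next
  case (SBox A \<phi>) show ?case using SBox.IH[OF SBox.prems] by auto
next
  case (SAnd \<phi>1 \<phi>2) show ?case using SAnd.IH(1)[OF SAnd.prems] SAnd.IH(2)[OF SAnd.prems] by auto
next
  case (SVar Y) show ?case using SVar.prems by simp
qed simp_all

lemma csem_mono: "(\<forall>X. \<rho> X \<subseteq> \<sigma> X) \<Longrightarrow> csem T \<phi> \<rho> \<subseteq> csem T \<phi> \<sigma>"
proof (induction \<phi> arbitrary: \<rho> \<sigma>)
  case (CMin X \<phi>)
  show ?case apply simp apply (rule lfp_mono)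
  proof -
    fix Z show "csem T \<phi> (\<rho>(X := Z)) \<subseteq> csem T \<phi> (\<sigma>(X := Z))"
      apply (rule CMin.IH) using CMin.prems by simp
  qed
next
  case (CDia A \<phi>) show ?case using CDia.IH[OF CDia.prems] by auto
next
  case (COr \<phi>1 \<phi>2) show ?case using COr.IH(1)[OF COr.prems] COr.IH(2)[OF COr.prems] by auto
next
  case (CVar Y) show ?case using CVar.prems by simp
qed simp_all

lemma succ_cover:
  assumes "ftr T' p' \<subseteq> \<Union>(ftr T ` Q)" "wstep T' p' a q'"
  shows "ftr T' q' \<subseteq> \<Union>(ftr T ` {q2. \<exists>q\<in>Q. wstep T q a q2})"
proof
  fix s assume "s \<in> ftr T' q'"
  then have "a # s \<in> ftr T' p'" using assms(2) ftr_cons[of a s T' p'] by blast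
  then have "a # s \<in> \<Union>(ftr T ` Q)" using assms(1) by (rule subsetD[rotated])
  then obtain q where q: "q \<in> Q" "a # s \<in> ftr T q" by blast
  then obtain q2 where "wstep T q a q2" "s \<in> ftr T q2" using ftr_cons[of a s T q] by blast
  then show "s \<in> \<Union>(ftr T ` {q2. \<exists>q\<in>Q. wstep T q a q2})" using q(1) by blast
qed

lemma s_main: "(\<forall>X. srel T T' (\<rho> X) (\<rho>' X)) \<Longrightarrow> srel T T' (ssem T \<phi> \<rho>) (ssem T' \<phi> \<rho>')"
proof (induction \<phi> arbitrary: \<rho> \<rho>')
  case STT show ?case unfolding srel_def by simp
next
  case SFF show ?case unfolding srel_def
  proof (intro allI impI)
    fix Q p' assume h: "Q \<subseteq> ssem T SFF \<rho> \<and> ftr T' p' \<subseteq> \<Union>(ftr T ` Q)"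
    then have "[] \<in> \<Union>(ftr T ` Q)" using ftr_nil[of T' p'] by (meson subsetD)
    then show "p' \<in> ssem T' SFF \<rho>'" using h by auto
  qed
next
  case (SBox A \<phi>)
  show ?case unfolding srel_def
  proof (intro allI impI)
    fix Q p' assume h: "Q \<subseteq> ssem T (SBox A \<phi>) \<rho> \<and> ftr T' p' \<subseteq> \<Union>(ftr T ` Q)"
    show "p' \<in> ssem T' (SBox A \<phi>) \<rho>'"
    proof (simp, intro ballI allI impI)
      fix a q' assume a: "a \<in> A" and st: "wstep T' p' a q'"
      have 1: "{q2. \<exists>q\<in>Q. wstep T q a q2} \<subseteq> ssem T \<phi> \<rho>"
      proof
        fix q2 assume "q2 \<in> {q2. \<exists>q\<in>Q. wstep T q a q2}"
        then obtain q where q: "q \<in> Q" "wstep T q a q2" by blast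
        have "q \<in> ssem T (SBox A \<phi>) \<rho>" using h q(1) by blast
        then show "q2 \<in> ssem T \<phi> \<rho>" using a q(2) by simp
      qed
      have 2: "ftr T' q' \<subseteq> \<Union>(ftr T ` {q2. \<exists>q\<in>Q. wstep T q a q2})"
        using succ_cover[of T' p' T Q a q'] h st by blast
      have IH: "srel T T' (ssem T \<phi> \<rho>) (ssem T' \<phi> \<rho>')" by (rule SBox.IH[OF SBox.prems])
      show "q' \<in> ssem T' \<phi> \<rho>'" using IH[unfolded srel_def, rule_format, OF conjI[OF 1 2]] .
    qed
  qed
next
  case (SAnd \<phi>1 \<phi>2)
  have "srel T T' (ssem T \<phi>1 \<rho>) (ssem T' \<phi>1 \<rho>')" "srel T T' (ssem T \<phi>2 \<rho>) (ssem T' \<phi>2 \<rho>')"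
    using SAnd.IH SAnd.prems by auto
  then show ?case unfolding srel_def
  proof (intro allI impI)
    fix Q p' assume i: "\<forall>Q p'. Q \<subseteq> ssem T \<phi>1 \<rho> \<and> ftr T' p' \<subseteq> \<Union> (ftr T ` Q) \<longrightarrow> p' \<in> ssem T' \<phi>1 \<rho>'"
       "\<forall>Q p'. Q \<subseteq> ssem T \<phi>2 \<rho> \<and> ftr T' p' \<subseteq> \<Union> (ftr T ` Q) \<longrightarrow> p' \<in> ssem T' \<phi>2 \<rho>'"
      and h: "Q \<subseteq> ssem T (SAnd \<phi>1 \<phi>2) \<rho> \<and> ftr T' p' \<subseteq> \<Union> (ftr T ` Q)"
    have "Q \<subseteq> ssem T \<phi>1 \<rho>" "Q \<subseteq> ssem T \<phi>2 \<rho>" using h by auto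
    then have "p' \<in> ssem T' \<phi>1 \<rho>'" "p' \<in> ssem T' \<phi>2 \<rho>'"
      using i(1)[rule_format, of Q p'] i(2)[rule_format, of Q p'] h by auto
    then show "p' \<in> ssem T' (SAnd \<phi>1 \<phi>2) \<rho>'" by simp
  qed
next
  case (SVar X) show ?case using SVar.prems by simp
next
  case (SMax X \<phi>)
  define F where "F = (\<lambda>S. ssem T \<phi> (\<rho>(X := S)))"
  define F' where "F' = (\<lambda>S. ssem T' \<phi> (\<rho>'(X := S)))"
  define G' where "G' = {p'. \<exists>Q \<subseteq> gfp F. ftr T' p' \<subseteq> \<Union>(ftr T ` Q)}"
  have monoF: "mono F" unfolding F_def by (rule monoI, rule ssem_mono, simp)
  have r: "srel T T' (gfp F) G'" unfolding srel_def G'_def by blast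
  have "\<forall>Y. srel T T' ((\<rho>(X := gfp F)) Y) ((\<rho>'(X := G')) Y)" using SMax.prems r by simp
  then have "srel T T' (ssem T \<phi> (\<rho>(X := gfp F))) (ssem T' \<phi> (\<rho>'(X := G')))" by (rule SMax.IH)
  then have "srel T T' (F (gfp F)) (F' G')" by (simp add: F_def F'_def)
  then have i: "\<And>Q p'. Q \<subseteq> F (gfp F) \<Longrightarrow> ftr T' p' \<subseteq> \<Union>(ftr T ` Q) \<Longrightarrow> p' \<in> F' G'"
    unfolding srel_def by blast
  have "G' \<subseteq> F' G'"
  proof
    fix p' assume "p' \<in> G'"
    then obtain Q where Q: "Q \<subseteq> gfp F" "ftr T' p' \<subseteq> \<Union>(ftr T ` Q)" unfolding G'_def by blast
    have "Q \<subseteq> F (gfp F)" using Q(1) gfp_unfold[OF monoF] by simp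
    then show "p' \<in> F' G'" using i Q(2) by blast
  qed
  then have "G' \<subseteq> gfp F'" by (rule gfp_upperbound)
  then have "srel T T' (gfp F) (gfp F')" using r unfolding srel_def by blast
  then show ?case unfolding F_def F'_def by simp
qed

lemma c_main: "(\<forall>X. crel T T' (\<rho> X) (\<rho>' X)) \<Longrightarrow> crel T T' (csem T \<phi> \<rho>) (csem T' \<phi> \<rho>')"
proof (induction \<phi> arbitrary: \<rho> \<rho>')
  case CTT show ?case unfolding crel_def
  proof (intro allI impI)
    fix Q p' assume h: "p' \<in> csem T' CTT \<rho>' \<and> ftr T' p' \<subseteq> \<Union>(ftr T ` Q)"
    then have "[] \<in> \<Union>(ftr T ` Q)" using ftr_nil[of T' p'] by (meson subsetD)
    then show "Q \<inter> csem T CTT \<rho> \<noteq> {}" by auto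
  qed
next
  case CFF show ?case unfolding crel_def by simp
next
  case (CDia A \<phi>)
  show ?case unfolding crel_def
  proof (intro allI impI)
    fix Q p' assume h: "p' \<in> csem T' (CDia A \<phi>) \<rho>' \<and> ftr T' p' \<subseteq> \<Union>(ftr T ` Q)"
    then obtain a q' where a: "a \<in> A" and st: "wstep T' p' a q'" and q': "q' \<in> csem T' \<phi> \<rho>'"
      by auto
    have 2: "ftr T' q' \<subseteq> \<Union>(ftr T ` {q2. \<exists>q\<in>Q. wstep T q a q2})"
      using succ_cover[of T' p' T Q a q'] h st by blast
    have IH: "crel T T' (csem T \<phi> \<rho>) (csem T' \<phi> \<rho>')" by (rule CDia.IH[OF CDia.prems])
    have "{q2. \<exists>q\<in>Q. wstep T q a q2} \<inter> csem T \<phi> \<rho> \<noteq> {}"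
      using IH[unfolded crel_def, rule_format, OF conjI[OF q' 2]] .
    then obtain q q2 where "q \<in> Q" "wstep T q a q2" "q2 \<in> csem T \<phi> \<rho>" by blast
    then have "q \<in> Q \<inter> csem T (CDia A \<phi>) \<rho>" using a by auto
    then show "Q \<inter> csem T (CDia A \<phi>) \<rho> \<noteq> {}" by blast
  qed
next
  case (COr \<phi>1 \<phi>2)
  have "crel T T' (csem T \<phi>1 \<rho>) (csem T' \<phi>1 \<rho>')" "crel T T' (csem T \<phi>2 \<rho>) (csem T' \<phi>2 \<rho>')"
    using COr.IH COr.prems by auto
  then show ?case unfolding crel_def
  proof (intro allI impI)
    fix Q p' assume i: "\<forall>Q p'. p' \<in> csem T' \<phi>1 \<rho>' \<and> ftr T' p' \<subseteq> \<Union> (ftr T ` Q) \<longrightarrow> Q \<inter> csem T \<phi>1 \<rho> \<noteq> {}"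
       "\<forall>Q p'. p' \<in> csem T' \<phi>2 \<rho>' \<and> ftr T' p' \<subseteq> \<Union> (ftr T ` Q) \<longrightarrow> Q \<inter> csem T \<phi>2 \<rho> \<noteq> {}"
      and h: "p' \<in> csem T' (COr \<phi>1 \<phi>2) \<rho>' \<and> ftr T' p' \<subseteq> \<Union> (ftr T ` Q)"
    have "p' \<in> csem T' \<phi>1 \<rho>' \<or> p' \<in> csem T' \<phi>2 \<rho>'" using h by simp
    then have "Q \<inter> csem T \<phi>1 \<rho> \<noteq> {} \<or> Q \<inter> csem T \<phi>2 \<rho> \<noteq> {}"
      using i(1)[rule_format, of p' Q] i(2)[rule_format, of p' Q] h by blast
    then show "Q \<inter> csem T (COr \<phi>1 \<phi>2) \<rho> \<noteq> {}" by auto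
  qed
next
  case (CVar X) show ?case using CVar.prems by simp
next
  case (CMin X \<phi>)
  define F where "F = (\<lambda>S. csem T \<phi> (\<rho>(X := S)))"
  define F' where "F' = (\<lambda>S. csem T' \<phi> (\<rho>'(X := S)))"
  define G' where "G' = {p'. \<forall>Q. ftr T' p' \<subseteq> \<Union>(ftr T ` Q) \<longrightarrow> Q \<inter> lfp F \<noteq> {}}"
  have monoF: "mono F" unfolding F_def by (rule monoI, rule csem_mono, simp)
  have r: "crel T T' (lfp F) G'" unfolding crel_def G'_def by blast
  have "\<forall>Y. crel T T' ((\<rho>(X := lfp F)) Y) ((\<rho>'(X := G')) Y)" using CMin.prems r by simp
  then have "crel T T' (csem T \<phi> (\<rho>(X := lfp F))) (csem T' \<phi> (\<rho>'(X := G')))" by (rule CMin.IH)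
  then have "crel T T' (F (lfp F)) (F' G')" by (simp add: F_def F'_def)
  then have i: "\<And>Q p'. p' \<in> F' G' \<Longrightarrow> ftr T' p' \<subseteq> \<Union>(ftr T ` Q) \<Longrightarrow> Q \<inter> F (lfp F) \<noteq> {}"
    unfolding crel_def by blast
  have "F' G' \<subseteq> G'"
  proof
    fix p' assume p': "p' \<in> F' G'"
    show "p' \<in> G'" unfolding G'_def
    proof (intro CollectI allI impI)
      fix Q assume "ftr T' p' \<subseteq> \<Union>(ftr T ` Q)"
      then have "Q \<inter> F (lfp F) \<noteq> {}" using i p' by blast
      then show "Q \<inter> lfp F \<noteq> {}" using lfp_unfold[OF monoF] by simp
    qed
  qed
  then have "lfp F' \<subseteq> G'" by (rule lfp_lowerbound)
  then have "crel T T' (lfp F) (lfp F')" using r unfolding crel_def by blast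
  then show ?case unfolding F_def F'_def by simp
qed

theorem mainTheorem16:
  fixes T :: "('p, 'a::finite) lts" and T' :: "('q, 'a) lts"
    and p :: 'p and p' :: 'q
  assumes "subsumes T p T' p'"
  shows "(\<forall>\<phi> :: ('a, 'v) shml. sguarded \<phi> \<and> sfv \<phi> = {} \<and> p \<in> ssem T \<phi> (\<lambda>_. {})
            \<longrightarrow> p' \<in> ssem T' \<phi> (\<lambda>_. {}))
       \<and> (\<forall>\<phi> :: ('a, 'v) chml. cguarded \<phi> \<and> cfv \<phi> = {} \<and> p \<notin> csem T \<phi> (\<lambda>_. {})
            \<longrightarrow> p' \<notin> csem T' \<phi> (\<lambda>_. {}))"
proof -
  have cov: "ftr T' p' \<subseteq> \<Union>(ftr T ` {p})"
    using assms unfolding subsumes_def ftr_def by auto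
  have s0: "\<forall>X. srel T T' ((\<lambda>_. {}) X) ((\<lambda>_. {}) X)" unfolding srel_def
  proof (intro allI impI)
    fix X :: 'v and Q p'
    assume h: "Q \<subseteq> {} \<and> ftr T' p' \<subseteq> \<Union>(ftr T ` Q)"
    then have "[] \<in> \<Union>(ftr T ` Q)" using ftr_nil[of T' p'] by (meson subsetD)
    then show "p' \<in> {}" using h by auto
  qed
  have c0: "\<forall>X. crel T T' ((\<lambda>_. {}) X) ((\<lambda>_. {}) X)" by (simp add: crel_def)
  show ?thesis
  proof (intro conjI allI impI)
    fix \<phi> :: "('a, 'v) shml"
    assume "sguarded \<phi> \<and> sfv \<phi> = {} \<and> p \<in> ssem T \<phi> (\<lambda>_. {})"
    then show "p' \<in> ssem T' \<phi> (\<lambda>_. {})"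
      using s_main[OF s0, of \<phi>, unfolded srel_def, rule_format, of "{p}" p'] cov by blast
  next
    fix \<phi> :: "('a, 'v) chml"
    assume "cguarded \<phi> \<and> cfv \<phi> = {} \<and> p \<notin> csem T \<phi> (\<lambda>_. {})"
    then show "p' \<notin> csem T' \<phi> (\<lambda>_. {})"
      using c_main[OF c0, of \<phi>, unfolded crel_def, rule_format, of p' "{p}"] cov by blast
  qed
qed

end
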